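(* In $\mathcal{V}$, for all $p,q\in P$: if $p\preccurlyeq q$ then $|S_p|\leqslant|S_q|$, and if $p\preccurlyeq^\ast q$ then $|S_p|\leqslant^\ast|S_q|$.
   Context: Work in $\mathsf{ZFA}$ (set theory with atoms) over a ground model of $\mathsf{ZFC}$ containing a doubly ordered set $\langle P,\preccurlyeq,\preccurlyeq^\ast\rangle$ (i.e. $\preccurlyeq$ a partial order on $P$, $\preccurlyeq^\ast$ a preorder on $P$, and $p\preccurlyeq q\Rightarrow p\preccurlyeq^\ast q$). Write $p\prec q$ for ($p\preccurlyeq q$ and $p\neq q$). For a quadruple $\langle x_0,x_1,x_2,x_3\rangle$ and $i<4$, $\mathrm{pr}_i(\langle x_0,x_1,x_2,x_3\rangle)=x_i$. For a set $S$, $\mathscr{S}(S)$ is the set of permutations of $S$. Define recursively $A_0=\{\langle0,p,\varnothing,k\rangle\mid p\in P,k\in\omega\}$ and $A_{n+1}=A_n\cup\{\langle n+1,q,a,0\rangle\mid q\in P,a\in A_n,\mathrm{pr}_1(a)\prec q\}\cup\{\langle n+1,q,a,k\rangle\mid q\in P,a\in A_n,\mathrm{pr}_1(a)\not\preccurlyeq q,\mathrm{pr}_1(a)\preccurlyeq^\ast q,k\in\omega\}$; let $A=\bigcup_{n}A_n$, whose elements serve as the atoms. Define groups $\mathcal{G}_n\subseteq\mathscr{S}(A_n)$: $\mathcal{G}_0=\{f\in\mathscr{S}(A_0)\mid \mathrm{pr}_1(f(a))=\mathrm{pr}_1(a)\text{ for all }a\in A_0\}$; for $f\in\mathscr{S}(A_{n+1})$,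 $f\in\mathcal{G}_{n+1}$ iff $f{\upharpoonright}A_n\in\mathcal{G}_n$ and for all $b\in A_{n+1}\setminus A_n$, $\mathrm{pr}_1(f(b))=\mathrm{pr}_1(b)$ and $\mathrm{pr}_2(f(b))=f(\mathrm{pr}_2(b))$. Let $\mathcal{G}=\{\pi\in\mathscr{S}(A)\mid \pi{\upharpoonright}A_n\in\mathcal{G}_n\text{ for all }n\}$. $\mathcal{V}$ is the permutation model determined by $\mathcal{G}$ and finite supports: $x\in\mathcal{V}$ iff $x\subseteq\mathcal{V}$ and there is a finite $B\subseteq A$ (a support of $x$) such that every $\pi\in\mathcal{G}$ fixing $B$ pointwise fixes $x$. For $p\in P$, $S_p=\{a\in A\mid \mathrm{pr}_1(a)=p\}$. For cardinals, $|X|\leqslant|Y|$ means there is an injection $X\to Y$, and $|X|\leqslant^\ast|Y|$ means there is a surjection from a subset of $Y$ onto $X$ (both computed in $\mathcal{V}$). *)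

theory Defs
  imports Main
begin

text \<open>Atoms are quadruples (n, p, a, k); the third component is None for the
empty set (level 0) and Some a for an atom a.\<close>

datatype 'p atom = Atom (pr0: nat) (pr1: 'p) (pr2: "'p atom option") (pr3: nat)

definition doubly_ordered :: "'p set \<Rightarrow> ('p \<times> 'p) set \<Rightarrow> ('p \<times> 'p) set \<Rightarrow> bool" where
  "doubly_ordered P le les \<longleftrightarrow> partial_order_on P le \<and> preorder_on P les \<and>
     (\<forall>p q. (p, q) \<in> le \<longrightarrow> (p, q) \<in> les)"

fun An :: "'p set \<Rightarrow> ('p \<times> 'p) set \<Rightarrow> ('p \<times> 'p) set \<Rightarrow> nat \<Rightarrow> 'p atom set" where
  "An P le les 0 = {Atom 0 p None k | p k. p \<in> P}"
| "An P le les (Suc n) = An P le les n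
     \<union> {Atom (Suc n) q (Some a) 0 | q a. q \<in> P \<and> a \<in> An P le les n \<and>
            (pr1 a, q) \<in> le \<and> pr1 a \<noteq> q}
     \<union> {Atom (Suc n) q (Some a) k | q a k. q \<in> P \<and> a \<in> An P le les n \<and>
            (pr1 a, q) \<notin> le \<and> (pr1 a, q) \<in> les}"

definition Atoms :: "'p set \<Rightarrow> ('p \<times> 'p) set \<Rightarrow> ('p \<times> 'p) set \<Rightarrow> 'p atom set" where
  "Atoms P le les = (\<Union>n. An P le les n)"

fun inGn :: "'p set \<Rightarrow> ('p \<times> 'p) set \<Rightarrow> ('p \<times> 'p) set \<Rightarrow> nat \<Rightarrow> ('p atom \<Rightarrow> 'p atom) \<Rightarrow> bool" where
  "inGn P le les 0 f \<longleftrightarrow> bij_betw f (An P le les 0) (An P le les 0) \<and>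
     (\<forall>a \<in> An P le les 0. pr1 (f a) = pr1 a)"
| "inGn P le les (Suc n) f \<longleftrightarrow> bij_betw f (An P le les (Suc n)) (An P le les (Suc n)) \<and>
     inGn P le les n f \<and>
     (\<forall>b \<in> An P le les (Suc n) - An P le les n.
        pr1 (f b) = pr1 b \<and> pr2 (f b) = map_option f (pr2 b))"

definition inG :: "'p set \<Rightarrow> ('p \<times> 'p) set \<Rightarrow> ('p \<times> 'p) set \<Rightarrow> ('p atom \<Rightarrow> 'p atom) \<Rightarrow> bool" where
  "inG P le les \<pi> \<longleftrightarrow> bij_betw \<pi> (Atoms P le les) (Atoms P le les) \<and> (\<forall>n. inGn P le les n \<pi>)"

text \<open>A set of ordered pairs of atoms (e.g. the graph of a function between
sets of atoms) belongs to the permutation model iff it has a finite support.\<close>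

definition sym_rel :: "'p set \<Rightarrow> ('p \<times> 'p) set \<Rightarrow> ('p \<times> 'p) set \<Rightarrow> ('p atom \<times> 'p atom) set \<Rightarrow> bool" where
  "sym_rel P le les R \<longleftrightarrow> (\<exists>B. finite B \<and> B \<subseteq> Atoms P le les \<and>
     (\<forall>\<pi>. inG P le les \<pi> \<and> (\<forall>b \<in> B. \<pi> b = b) \<longrightarrow> map_prod \<pi> \<pi> ` R = R))"

definition S :: "'p set \<Rightarrow> ('p \<times> 'p) set \<Rightarrow> ('p \<times> 'p) set \<Rightarrow> 'p \<Rightarrow> 'p atom set" where
  "S P le les p = {a \<in> Atoms P le les. pr1 a = p}"

definition card_le_V :: "'p set \<Rightarrow> ('p \<times> 'p) set \<Rightarrow> ('p \<times> 'p) set \<Rightarrow> 'p atom set \<Rightarrow> 'p atom set \<Rightarrow> bool" where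
  "card_le_V P le les X Y \<longleftrightarrow> (\<exists>R. sym_rel P le les R \<and> R \<subseteq> X \<times> Y \<and>
     (\<forall>x \<in> X. \<exists>!y. (x, y) \<in> R) \<and>
     (\<forall>x1 x2 y. (x1, y) \<in> R \<and> (x2, y) \<in> R \<longrightarrow> x1 = x2))"

definition card_le_star_V :: "'p set \<Rightarrow> ('p \<times> 'p) set \<Rightarrow> ('p \<times> 'p) set \<Rightarrow> 'p atom set \<Rightarrow> 'p atom set \<Rightarrow> bool" where
  "card_le_star_V P le les X Y \<longleftrightarrow> (\<exists>R. sym_rel P le les R \<and> R \<subseteq> Y \<times> X \<and>
     (\<forall>y z1 z2. (y, z1) \<in> R \<and> (y, z2) \<in> R \<longrightarrow> z1 = z2) \<and>
     (\<forall>x \<in> X. \<exists>y. (y, x) \<in> R))"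

end

theory Submission
  imports Defs
begin

lemma An_pr0: "a \<in> An P le les n \<Longrightarrow> pr0 a \<le> n"
  by (induction n) auto

lemma An_self: "a \<in> An P le les n \<Longrightarrow> a \<in> An P le les (pr0 a)"
proof (induction n)
  case 0 then show ?case by auto
next
  case (Suc n)
  show ?case
  proof (cases "a \<in> An P le les n")
    case True then show ?thesis using Suc by auto
  next
    case False
    then have "pr0 a = Suc n" using Suc.prems by auto
    then show ?thesis using Suc.prems by simp
  qed
qed

lemma An_mono: "m \<le> n \<Longrightarrow> An P le les m \<subseteq> An P le les n"
  by (induction n) (auto simp: le_Suc_eq)

lemma Atoms_iff: "a \<in> Atoms P le les \<longleftrightarrow> a \<in> An P le les (pr0 a)"
  unfolding Atoms_def using An_self by blast

lemma An_iff: "a \<in> An P le les n \<longleftrightarrow> a \<in> Atoms P le les \<and> pr0 a \<le> n"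
proof
  assume "a \<in> An P le les n"
  then show "a \<in> Atoms P le les \<and> pr0 a \<le> n" unfolding Atoms_def using An_pr0 by blast
next
  assume h: "a \<in> Atoms P le les \<and> pr0 a \<le> n"
  then have "a \<in> An P le les (pr0 a)" using Atoms_iff by metis
  then show "a \<in> An P le les n" using An_mono h by blast
qed

lemma Atoms_Suc:
  assumes "b \<in> Atoms P le les" "pr0 b = Suc m"
  shows "\<exists>a k. b = Atom (Suc m) (pr1 b) (Some a) k \<and> a \<in> An P le les m \<and>
    ((pr1 a, pr1 b) \<in> le \<and> pr1 a \<noteq> pr1 b \<and> k = 0 \<or> (pr1 a, pr1 b) \<notin> le \<and> (pr1 a, pr1 b) \<in> les)"
proof -
  have "b \<in> An P le les (Suc m)" using assms Atoms_iff by metis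
  moreover have "b \<notin> An P le les m" using assms An_pr0 by fastforce
  ultimately show ?thesis by auto
qed

lemma Atoms_pr2:
  assumes "b \<in> Atoms P le les" "pr2 b = Some a"
  shows "a \<in> Atoms P le les"
proof (cases "pr0 b")
  case 0
  then have "b \<in> An P le les 0" using assms Atoms_iff by metis
  then show ?thesis using assms by auto
next
  case (Suc m)
  then obtain c k where "b = Atom (Suc m) (pr1 b) (Some c) k" "c \<in> An P le les m"
    using Atoms_Suc[OF assms(1) Suc] by blast
  then have "a = c" using assms(2) by (metis atom.sel(3) option.inject)
  then show ?thesis using \<open>c \<in> An P le les m\<close> unfolding Atoms_def by auto
qed

lemma bij_An:
  assumes "inG P le les \<pi>" shows "bij_betw \<pi> (An P le les n) (An P le les n)"
proof -
  have "inGn P le les n \<pi>" using assms inG_def by metis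
  then show ?thesis by (cases n) (simp del: An.simps)+
qed

lemma G_Atoms: "inG P le les \<pi> \<Longrightarrow> a \<in> Atoms P le les \<Longrightarrow> \<pi> a \<in> Atoms P le les"
  unfolding inG_def bij_betw_def by auto

lemma G_pr0:
  assumes g: "inG P le les \<pi>" and a: "a \<in> Atoms P le les"
  shows "pr0 (\<pi> a) = pr0 a"
proof -
  have "a \<in> An P le les (pr0 a)" using a Atoms_iff by metis
  then have "\<pi> a \<in> An P le les (pr0 a)" using bij_An[OF g] bij_betwE by metis
  then have le1: "pr0 (\<pi> a) \<le> pr0 a" using An_pr0 by metis
  have pa: "\<pi> a \<in> An P le les (pr0 (\<pi> a))" using G_Atoms[OF g a] Atoms_iff by metis
  then obtain a' where a': "a' \<in> An P le les (pr0 (\<pi> a))" "\<pi> a' = \<pi> a"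
    using bij_An[OF g, of "pr0 (\<pi> a)"] unfolding bij_betw_def by (metis imageE)
  have "a' \<in> Atoms P le les" using a' An_iff by metis
  moreover have "inj_on \<pi> (Atoms P le les)" using g unfolding inG_def bij_betw_def by auto
  ultimately have "a' = a" using a a' inj_on_def by metis
  then have "pr0 a \<le> pr0 (\<pi> a)" using a' An_pr0 by metis
  then show ?thesis using le1 by simp
qed

lemma G_pr1:
  assumes g: "inG P le les \<pi>" and a: "a \<in> Atoms P le les"
  shows "pr1 (\<pi> a) = pr1 a"
proof (cases "pr0 a")
  case 0
  then have "a \<in> An P le les 0" using a Atoms_iff by metis
  moreover have "inGn P le les 0 \<pi>" using g inG_def by metis
  ultimately show ?thesis by simp
next
  case (Suc m)
  then have "a \<in> An P le les (Suc m)" using a Atoms_iff by metis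
  moreover have "a \<notin> An P le les m" using Suc An_pr0 by fastforce
  moreover have "inGn P le les (Suc m) \<pi>" using g inG_def by metis
  ultimately show ?thesis by (simp only: inGn.simps) blast
qed

lemma G_pr2:
  assumes g: "inG P le les \<pi>" and a: "a \<in> Atoms P le les" and s: "pr0 a = Suc m"
  shows "pr2 (\<pi> a) = map_option \<pi> (pr2 a)"
proof -
  have "a \<in> An P le les (Suc m)" using a s Atoms_iff by metis
  moreover have "a \<notin> An P le les m" using s An_pr0 by fastforce
  moreover have "inGn P le les (Suc m) \<pi>" using g inG_def by metis
  ultimately show ?thesis by (simp only: inGn.simps) blast
qed

lemma G_S:
  assumes g: "inG P le les \<pi>"
  shows "\<pi> ` S P le les p = S P le les p"
proof
  show "\<pi> ` S P le les p \<subseteq> S P le les p"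
    using G_Atoms[OF g] G_pr1[OF g] unfolding S_def by auto
next
  show "S P le les p \<subseteq> \<pi> ` S P le les p"
  proof
    fix b assume b: "b \<in> S P le les p"
    have "b \<in> \<pi> ` Atoms P le les"
      using g b unfolding inG_def bij_betw_def S_def by auto
    then obtain a where a: "a \<in> Atoms P le les" "\<pi> a = b" by blast
    then have "a \<in> S P le les p" using b G_pr1[OF g a(1)] unfolding S_def by auto
    then show "b \<in> \<pi> ` S P le les p" using a by auto
  qed
qed

lemma map_Id_on: "map_prod f f ` Id_on A = Id_on (f ` A)"
proof
  show "map_prod f f ` Id_on A \<subseteq> Id_on (f ` A)" by (auto simp: Id_on_def)
next
  show "Id_on (f ` A) \<subseteq> map_prod f f ` Id_on A"
  proof
    fix z assume "z \<in> Id_on (f ` A)"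
    then obtain x where "x \<in> A" "z = (f x, f x)" by (auto simp: Id_on_def)
    then show "z \<in> map_prod f f ` Id_on A" by (metis Id_onI map_prod_simp rev_image_eqI)
  qed
qed

lemma sym_Id:
  "sym_rel P le les (Id_on (S P le les p))"
  unfolding sym_rel_def
proof (intro exI[of _ "{}"] conjI allI impI)
  fix \<pi> assume "inG P le les \<pi> \<and> (\<forall>b\<in>{}. \<pi> b = b)"
  then have g: "inG P le les \<pi>" by simp
  have "\<pi> ` S P le les p = S P le les p" using G_S[OF g] .
  then show "map_prod \<pi> \<pi> ` Id_on (S P le les p) = Id_on (S P le les p)"
    by (simp add: map_Id_on)
qed auto

definition T :: "'p set \<Rightarrow> ('p \<times> 'p) set \<Rightarrow> ('p \<times> 'p) set \<Rightarrow> 'p \<Rightarrow> 'p \<Rightarrow> ('p atom \<times> 'p atom) set" where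
  "T P le les p q = {(a, b). a \<in> S P le les p \<and> b \<in> S P le les q \<and> pr2 b = Some a \<and> pr0 b = Suc (pr0 a)}"

lemma T_fwd:
  assumes g: "inG P le les \<pi>" and ab: "(a, b) \<in> T P le les p q"
  shows "(\<pi> a, \<pi> b) \<in> T P le les p q"
proof -
  have a: "a \<in> Atoms P le les" "pr1 a = p" and b: "b \<in> Atoms P le les" "pr1 b = q"
    and r: "pr2 b = Some a" "pr0 b = Suc (pr0 a)" using ab unfolding T_def S_def by auto
  show ?thesis unfolding T_def S_def
    using G_Atoms[OF g a(1)] G_Atoms[OF g b(1)] G_pr1[OF g a(1)] G_pr1[OF g b(1)]
      G_pr0[OF g a(1)] G_pr0[OF g b(1)] G_pr2[OF g b(1) r(2)] a b r by auto
qed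

lemma T_bwd:
  assumes g: "inG P le les \<pi>" and ab: "(a, b) \<in> T P le les p q"
  shows "(a, b) \<in> map_prod \<pi> \<pi> ` T P le les p q"
proof -
  have a: "a \<in> Atoms P le les" "pr1 a = p" and b: "b \<in> Atoms P le les" "pr1 b = q"
    and r: "pr2 b = Some a" "pr0 b = Suc (pr0 a)" using ab unfolding T_def S_def by auto
  have "b \<in> \<pi> ` Atoms P le les"
    using g b(1) unfolding inG_def bij_betw_def by auto
  then obtain b' where b': "b' \<in> Atoms P le les" "\<pi> b' = b" by blast
  have p0: "pr0 b' = Suc (pr0 a)" using G_pr0[OF g b'(1)] b' r by simp
  have p1: "pr1 b' = q" using G_pr1[OF g b'(1)] b' b by simp
  obtain a' k where ak: "b' = Atom (Suc (pr0 a)) (pr1 b') (Some a') k" "a' \<in> An P le les (pr0 a)"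
    using Atoms_Suc[OF b'(1) p0] by blast
  have a'A: "a' \<in> Atoms P le les" using ak(2) unfolding Atoms_def by auto
  have "pr2 b = Some (\<pi> a')" using G_pr2[OF g b'(1) p0] b' ak(1)
    by (metis atom.sel(3) option.simps(9))
  then have pa: "\<pi> a' = a" using r by simp
  have "pr1 a' = p" using G_pr1[OF g a'A] pa a by simp
  moreover have "pr0 a' = pr0 a" using G_pr0[OF g a'A] pa by simp
  ultimately have "(a', b') \<in> T P le les p q"
    unfolding T_def S_def using a'A b' p0 p1 ak(1) by (metis (mono_tags, lifting) atom.sel(3) case_prodI mem_Collect_eq)
  then show ?thesis using pa b' by force
qed

lemma sym_T: "sym_rel P le les (T P le les p q)"
  unfolding sym_rel_def
proof (intro exI[of _ "{}"] conjI allI impI)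
  fix \<pi> assume "inG P le les \<pi> \<and> (\<forall>b\<in>{}. \<pi> b = b)"
  then have g: "inG P le les \<pi>" by simp
  show "map_prod \<pi> \<pi> ` T P le les p q = T P le les p q"
    using T_fwd[OF g] T_bwd[OF g] by fastforce
qed auto

lemma sym_conv: "sym_rel P le les R \<Longrightarrow> sym_rel P le les (converse R)"
  unfolding sym_rel_def
proof -
  assume "\<exists>B. finite B \<and> B \<subseteq> Atoms P le les \<and>
     (\<forall>\<pi>. inG P le les \<pi> \<and> (\<forall>b \<in> B. \<pi> b = b) \<longrightarrow> map_prod \<pi> \<pi> ` R = R)"
  then obtain B where B: "finite B" "B \<subseteq> Atoms P le les"
     "\<forall>\<pi>. inG P le les \<pi> \<and> (\<forall>b \<in> B. \<pi> b = b) \<longrightarrow> map_prod \<pi> \<pi> ` R = R" by blast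
  have "map_prod \<pi> \<pi> ` converse R = converse (map_prod \<pi> \<pi> ` R)" for \<pi> by auto
  then show "\<exists>B. finite B \<and> B \<subseteq> Atoms P le les \<and>
     (\<forall>\<pi>. inG P le les \<pi> \<and> (\<forall>b \<in> B. \<pi> b = b) \<longrightarrow> map_prod \<pi> \<pi> ` converse R = converse R)"
    using B by metis
qed

lemma new_atom:
  assumes "x \<in> S P le les p" "q \<in> P" "(p, q) \<in> les" "(p, q) \<in> le \<longrightarrow> p \<noteq> q"
  shows "Atom (Suc (pr0 x)) q (Some x) 0 \<in> S P le les q"
proof -
  have x: "x \<in> An P le les (pr0 x)" "pr1 x = p" using assms(1) Atoms_iff unfolding S_def by auto
  then have "Atom (Suc (pr0 x)) q (Some x) 0 \<in> An P le les (Suc (pr0 x))"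
    using assms by auto
  then show ?thesis unfolding S_def Atoms_def by (simp del: An.simps) blast
qed

theorem lemma2p1:
  fixes P :: "'p set" and le les :: "('p \<times> 'p) set"
  assumes "doubly_ordered P le les"
  shows "\<forall>p \<in> P. \<forall>q \<in> P.
    ((p, q) \<in> le \<longrightarrow> card_le_V P le les (S P le les p) (S P le les q)) \<and>
    ((p, q) \<in> les \<longrightarrow> card_le_star_V P le les (S P le les p) (S P le les q))"
proof (intro ballI conjI impI)
  fix p q assume p: "p \<in> P" and q: "q \<in> P"
  have lels: "(p, q) \<in> le \<Longrightarrow> (p, q) \<in> les"
    using assms unfolding doubly_ordered_def by blast
  {
    assume pq: "(p, q) \<in> le"
    show "card_le_V P le les (S P le les p) (S P le les q)"
    proof (cases "p = q")
      case True
      then show ?thesis unfolding card_le_V_def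
        by (intro exI[of _ "Id_on (S P le les p)"]) (auto simp: sym_Id)
    next
      case False
      show ?thesis unfolding card_le_V_def
      proof (intro exI[of _ "T P le les p q"] conjI allI impI ballI)
        show "sym_rel P le les (T P le les p q)" by (rule sym_T)
        show "T P le les p q \<subseteq> S P le les p \<times> S P le les q" unfolding T_def by auto
      next
        fix x assume x: "x \<in> S P le les p"
        let ?y = "Atom (Suc (pr0 x)) q (Some x) 0"
        have y: "?y \<in> S P le les q" using new_atom[OF x q lels[OF pq]] False by blast
        show "\<exists>!y. (x, y) \<in> T P le les p q"
        proof
          show "(x, ?y) \<in> T P le les p q" using x y unfolding T_def by auto
        next
          fix y assume "(x, y) \<in> T P le les p q"
          then have yy: "y \<in> Atoms P le les" "pr1 y = q" "pr2 y = Some x" "pr0 y = Suc (pr0 x)"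
            "pr1 x = p"
            unfolding T_def S_def by auto
          obtain a k where ak: "y = Atom (Suc (pr0 x)) (pr1 y) (Some a) k"
            "(pr1 a, pr1 y) \<in> le \<and> pr1 a \<noteq> pr1 y \<and> k = 0 \<or> (pr1 a, pr1 y) \<notin> le \<and> (pr1 a, pr1 y) \<in> les"
            using Atoms_Suc[OF yy(1) yy(4)] by blast
          have "a = x" using ak(1) yy(3) by (metis atom.sel(3) option.inject)
          then have "k = 0" using ak(2) yy pq by auto
          then show "y = ?y" using ak(1) yy \<open>a = x\<close> by simp
        qed
      next
        fix x1 x2 y assume "(x1, y) \<in> T P le les p q \<and> (x2, y) \<in> T P le les p q"
        then show "x1 = x2" unfolding T_def by auto
      qed
    qed
  }
  {
    assume pq: "(p, q) \<in> les"
    show "card_le_star_V P le les (S P le les p) (S P le les q)"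
    proof (cases "p = q")
      case True
      then show ?thesis unfolding card_le_star_V_def
        by (intro exI[of _ "Id_on (S P le les p)"]) (auto simp: sym_Id)
    next
      case False
      show ?thesis unfolding card_le_star_V_def
      proof (intro exI[of _ "converse (T P le les p q)"] conjI allI impI ballI)
        show "sym_rel P le les (converse (T P le les p q))" by (rule sym_conv[OF sym_T])
        show "converse (T P le les p q) \<subseteq> S P le les q \<times> S P le les p" unfolding T_def by auto
      next
        fix y z1 z2 assume "(y, z1) \<in> converse (T P le les p q) \<and> (y, z2) \<in> converse (T P le les p q)"
        then show "z1 = z2" unfolding T_def by auto
      next
        fix x assume x: "x \<in> S P le les p"
        let ?y = "Atom (Suc (pr0 x)) q (Some x) 0"
        have y: "?y \<in> S P le les q" using new_atom[OF x q pq] False by blast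
        then show "\<exists>y. (y, x) \<in> converse (T P le les p q)" using x unfolding T_def by auto
      qed
    qed
  }
qed

end
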